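(* Let $\mathbf{L}=(L,\le)$ be a finite nontrivial join-semilattice with greatest element $1$ and let $(R,\vee,\circ)$ be a subsemiring of $(\mathrm{JM}(\mathbf{L}),\vee,\circ)$ such that $k_a\in R$ for all $a\in L$, every $f\in R$ satisfies $k_a\le f$ for some $a\in L$, and for all $a\in L$, $b\in L\setminus\{1\}$ there exists $f\in R$ with $f(x)=b$ for $x\le a$ and $f(x)>b$ otherwise. Then $(R,\vee)$ has a neutral element if and only if $\mathbf{L}$ is a lattice. If this neutral element exists, it is left but not right absorbing in $(R,\vee,\circ)$.
   Context: $\mathrm{JM}(\mathbf{L})$ is the set of maps $L\to L$ preserving binary joins, a semiring under pointwise join and composition, ordered pointwise; $k_a$ is the constant map with value $a$. A finite join-semilattice is a lattice iff it has a least element. An element $r$ is right absorbing if $s\circ r=r$ for all $s\in R$, left absorbing if $r\circ s=r$ for all $s\in R$. *)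

theory Defs
  imports Main
begin

text \<open>Join-preserving self-maps of a join-semilattice: the carrier of JM(L).
  The semiring operations are pointwise join (HOL's sup on functions) and composition.\<close>
definition JM :: "('a::semilattice_sup \<Rightarrow> 'a) set" where
  "JM = {f. \<forall>x y. f (sup x y) = sup (f x) (f y)}"

definition subsemiring_JM :: "('a::semilattice_sup \<Rightarrow> 'a) set \<Rightarrow> bool" where
  "subsemiring_JM R \<longleftrightarrow> R \<subseteq> JM \<and> (\<forall>f\<in>R. \<forall>g\<in>R. sup f g \<in> R \<and> f \<circ> g \<in> R)"

definition kconst :: "'a \<Rightarrow> 'a \<Rightarrow> 'a" where
  "kconst a = (\<lambda>_. a)"

definition join_neutral :: "('a::semilattice_sup \<Rightarrow> 'a) set \<Rightarrow> ('a \<Rightarrow> 'a) \<Rightarrow> bool" where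
  "join_neutral R e \<longleftrightarrow> e \<in> R \<and> (\<forall>f\<in>R. sup e f = f \<and> sup f e = f)"

definition right_absorbing :: "('a \<Rightarrow> 'a) set \<Rightarrow> ('a \<Rightarrow> 'a) \<Rightarrow> bool" where
  "right_absorbing R r \<longleftrightarrow> (\<forall>s\<in>R. s \<circ> r = r)"

definition left_absorbing :: "('a \<Rightarrow> 'a) set \<Rightarrow> ('a \<Rightarrow> 'a) \<Rightarrow> bool" where
  "left_absorbing R r \<longleftrightarrow> (\<forall>s\<in>R. r \<circ> s = r)"

text \<open>The poset is a lattice: every pair of elements has a greatest lower bound
  (least upper bounds exist by the join-semilattice structure).\<close>
definition is_lattice :: "'a::order set \<Rightarrow> bool" where
  "is_lattice L \<longleftrightarrow> (\<forall>x\<in>L. \<forall>y\<in>L. \<exists>m\<in>L. m \<le> x \<and> m \<le> y \<and> (\<forall>z\<in>L. z \<le> x \<and> z \<le> y \<longrightarrow> z \<le> m))"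

end

theory Submission
  imports Defs
begin

lemma least_lattice:
  fixes z :: "'a::{semilattice_sup, finite}"
  assumes "\<forall>a. z \<le> a"
  shows "is_lattice (UNIV :: 'a set)"
  unfolding is_lattice_def
proof (intro ballI)
  fix x y :: 'a
  let ?S = "{w. w \<le> x \<and> w \<le> y}"
  have "z \<in> ?S" using assms by auto
  then obtain m where m: "m \<in> ?S" "\<forall>b\<in>?S. m \<le> b \<longrightarrow> m = b"
    using finite_has_maximal2[of ?S z] by auto
  have "\<forall>w\<in>?S. w \<le> m"
  proof
    fix w assume w: "w \<in> ?S"
    have "sup m w \<in> ?S" using m(1) w by auto
    hence "m = sup m w" using m(2) by auto
    thus "w \<le> m" by (metis sup.cobounded2)
  qed
  thus "\<exists>m\<in>UNIV. m \<le> x \<and> m \<le> y \<and> (\<forall>z\<in>UNIV. z \<le> x \<and> z \<le> y \<longrightarrow> z \<le> m)"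
    using m(1) by auto
qed

lemma lattice_least:
  assumes "is_lattice (UNIV :: 'a::{order, finite} set)"
  shows "\<exists>z::'a. \<forall>a. z \<le> a"
proof -
  obtain m :: 'a where m: "\<forall>b. b \<le> m \<longrightarrow> m = b"
    using finite_has_minimal[of "UNIV :: 'a set"] by auto
  have "\<forall>a. m \<le> a"
  proof
    fix a
    obtain g where "g \<le> m" "g \<le> a" using assms unfolding is_lattice_def by blast
    thus "m \<le> a" using m by metis
  qed
  thus ?thesis by blast
qed

lemma neutral_const:
  fixes R :: "('a::semilattice_sup \<Rightarrow> 'a) set"
  assumes "join_neutral R e" "\<forall>a. kconst a \<in> R"
  shows "\<forall>x a. e x \<le> a"
proof (intro allI)
  fix x a
  have "sup e (kconst a) = kconst a" using assms unfolding join_neutral_def by blast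
  hence "e \<le> kconst a" by (metis sup.orderI sup_commute)
  thus "e x \<le> a" unfolding kconst_def by (simp add: le_fun_def)
qed

theorem proposition7p2:
  fixes R :: "('a::{semilattice_sup, order_top, finite} \<Rightarrow> 'a) set"
  assumes nontriv: "\<exists>x y::'a. x \<noteq> y"
    and sub: "subsemiring_JM R"
    and const_in: "\<forall>a. kconst a \<in> R"
    and above_const: "\<forall>f\<in>R. \<exists>a. kconst a \<le> f"
    and sep: "\<forall>a. \<forall>b. b \<noteq> top \<longrightarrow>
               (\<exists>f\<in>R. \<forall>x. (x \<le> a \<longrightarrow> f x = b) \<and> (\<not> x \<le> a \<longrightarrow> f x > b))"
  shows "((\<exists>e. join_neutral R e) \<longleftrightarrow> is_lattice (UNIV :: 'a set))
         \<and> (\<forall>e. join_neutral R e \<longrightarrow> left_absorbing R e \<and> \<not> right_absorbing R e)"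
proof (intro conjI allI impI iffI)
  assume "\<exists>e. join_neutral R e"
  then obtain e where "join_neutral R e" by blast
  hence "\<forall>x a. e x \<le> a" using neutral_const const_in by blast
  thus "is_lattice (UNIV :: 'a set)" using least_lattice by blast
next
  assume "is_lattice (UNIV :: 'a set)"
  then obtain z :: 'a where z: "\<forall>a. z \<le> a" using lattice_least by blast
  have "join_neutral R (kconst z)"
    unfolding join_neutral_def
  proof (intro conjI ballI)
    show "kconst z \<in> R" using const_in by blast
    fix f :: "'a \<Rightarrow> 'a"
    have "kconst z \<le> f" using z by (simp add: le_fun_def kconst_def)
    thus "sup (kconst z) f = f" "sup f (kconst z) = f"
      by (simp_all add: sup.absorb2 sup.absorb1)
  qed
  thus "\<exists>e. join_neutral R e" by blast
next
  fix e assume en: "join_neutral R e"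
  hence le: "\<forall>x a. e x \<le> a" using neutral_const const_in by blast
  hence ee: "\<forall>x y. e x = e y" by (metis order.antisym)
  show "left_absorbing R e" unfolding left_absorbing_def
    using ee by (auto simp: fun_eq_iff)
  show "\<not> right_absorbing R e"
  proof
    assume "right_absorbing R e"
    hence "kconst top \<circ> e = e" using const_in unfolding right_absorbing_def by blast
    hence "e top = top" by (metis comp_apply kconst_def)
    hence "\<forall>a::'a. top \<le> a" using le by metis
    hence "\<forall>a::'a. a = top" using top_unique by blast
    thus False using nontriv by metis
  qed
qed

end
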